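(* Let $n\in\mathbb N$ and let $\mathbf w_n$ be the word \[ \mathbf w_n=\biggl(\prod_{i=1}^n z_it_i\biggr)\,x\,\biggl(\prod_{i=1}^n z_iy_i^{(n)}\biggr)\,x\,\biggl(\prod_{j=1}^n\biggl(\prod_{i=1}^n y_i^{(n-j)}y_i^{(n+1-j)}\biggr)\biggr). \] Then for each $1\le i\le n$ and $0\le k\le n$ we have $D(\mathbf w_n,x)=n+1$, $D(\mathbf w_n, y_i^{(k)})=k$, $D(\mathbf w_n,t_i)=0$ and $D(\mathbf w_n,z_i)=1$.
   Context: Words are elements of the free monoid over a countably infinite alphabet. In $\mathbf w_n$, the letters $x$, $z_i$, $t_i$ ($1\le i\le n$), and $y_i^{(k)}$ ($1\le i\le n$, $0\le k\le n$) are pairwise distinct, and products $\prod_{i=1}^n$ are taken in increasing order of the index. A letter is simple in a word $\mathbf w$ if it occurs exactly once in $\mathbf w$. For a letter $x$ occurring in $\mathbf w$, ${_{i\mathbf w}}x$ denotes the $i$th occurrence of $x$ in $\mathbf w$. The depth $D(\mathbf w,x)$ of a letter $x$ in $\mathbf w$ is defined inductively: the letters of depth $0$ are exactly the simple letters of $\mathbf w$; a letter $x$ has depth $k\ge1$ if it does not have depth less than $k$ and there is the first occurrence of some letter of depth $k-1$ between ${_{1\mathbf w}}x$ and ${_{2\mathbf w}}x$ in $\mathbf w$; if for no $n\ge0$ is there a first occurrence of a letter of depth $n$ between ${_{1\mathbf w}}x$ and ${_{2\mathbf w}}x$, the depth of $x$ is $\infty$. *)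

theory Defs
  imports Main "HOL-Library.Extended_Nat"
begin

text \<open>Words are lists of letters.  Positions are 0-based list indices.\<close>

definition occ_pos :: "'a list \<Rightarrow> 'a \<Rightarrow> nat list" where
  "occ_pos w x = filter (\<lambda>p. w ! p = x) [0..<length w]"

definition occ :: "'a list \<Rightarrow> nat \<Rightarrow> 'a \<Rightarrow> nat" where
  "occ w i x = occ_pos w x ! (i - 1)"

definition simple :: "'a list \<Rightarrow> 'a \<Rightarrow> bool" where
  "simple w x \<longleftrightarrow> count_list w x = 1"

function has_depth :: "'a list \<Rightarrow> 'a \<Rightarrow> nat \<Rightarrow> bool" where
  "has_depth w x 0 = simple w x"
| "has_depth w x (Suc k) =
     ((\<forall>j. j \<le> k \<longrightarrow> \<not> has_depth w x j) \<and> count_list w x \<ge> 2 \<and>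
      (\<exists>y. has_depth w y k \<and> occ w 1 x < occ w 1 y \<and> occ w 1 y < occ w 2 x))"
  by pat_completeness auto
termination by (relation "measure (\<lambda>(w, x, k). k)") auto

definition D :: "'a list \<Rightarrow> 'a \<Rightarrow> enat" where
  "D w x = (if \<exists>k. has_depth w x k then enat (LEAST k. has_depth w x k) else \<infinity>)"

text \<open>Letters of the word w_n: pairwise distinct by construction.
  Z i = z_i, T i = t_i, Y i k = y_i^(k).\<close>
datatype letter = X | Z nat | T nat | Y nat nat

definition wn :: "nat \<Rightarrow> letter list" where
  "wn n =
     concat (map (\<lambda>i. [Z i, T i]) [1..<n+1]) @ [X] @
     concat (map (\<lambda>i. [Z i, Y i n]) [1..<n+1]) @ [X] @
     concat (map (\<lambda>j. concat (map (\<lambda>i. [Y i (n - j), Y i (n + 1 - j)]) [1..<n+1])) [1..<n+1])"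

end

theory Submission imports Defs begin

lemma map_plus_upt: "map ((+) a) [0..<b] = [a..<a+b]"
  by (induct b) simp_all

lemma occ_pos_append:
  "occ_pos (xs @ ys) y = occ_pos xs y @ map ((+) (length xs)) (occ_pos ys y)"
proof -
  have "[0..<length (xs@ys)] = [0..<length xs] @ [length xs..<length xs + length ys]"
    using upt_add_eq_append[of 0 "length xs" "length ys"] by simp
  moreover have "[length xs..<length xs + length ys] = map ((+) (length xs)) [0..<length ys]"
    by (rule map_plus_upt[symmetric])
  moreover have "filter (\<lambda>p. (xs @ ys) ! p = y) [0..<length xs] = filter (\<lambda>p. xs ! p = y) [0..<length xs]"
    by (rule filter_cong) (auto simp: nth_append)
  ultimately show ?thesis unfolding occ_pos_def
    by (simp add: filter_map comp_def)
qed

lemma occ_pos_Cons: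
  "occ_pos (a # ys) y = (if a = y then [0] else []) @ map Suc (occ_pos ys y)"
proof -
  have "occ_pos ([a] @ ys) y = occ_pos [a] y @ map ((+) (length [a])) (occ_pos ys y)"
    by (rule occ_pos_append)
  moreover have "occ_pos [a] y = (if a = y then [0] else [])" by (simp add: occ_pos_def)
  ultimately show ?thesis by simp
qed

lemma occ_pos_notin: "y \<notin> set xs \<Longrightarrow> occ_pos xs y = []"
  unfolding occ_pos_def by (auto simp: filter_empty_conv)

lemma occ1: "y \<notin> set u \<Longrightarrow> occ (u @ y # r) 1 y = length u"
  by (simp add: occ_def occ_pos_append occ_pos_Cons occ_pos_notin)

lemma occ12: "x \<notin> set u \<Longrightarrow> x \<notin> set v \<Longrightarrow>
   occ (u @ x # v @ x # s) 1 x = length u \<and> occ (u @ x # v @ x # s) 2 x = Suc (length u + length v)"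
  by (simp add: occ_def occ_pos_append occ_pos_Cons occ_pos_notin)

lemma occ_first:
  assumes "y \<in> set w"
  shows "occ w 1 y < length w \<and> w ! occ w 1 y = y \<and> (\<forall>q < occ w 1 y. w ! q \<noteq> y)"
proof -
  obtain u r where w: "w = u @ y # r" and nu: "y \<notin> set u" using split_list_first[OF assms] by blast
  have o: "occ w 1 y = length u" unfolding w by (rule occ1[OF nu])
  have "\<forall>q < length u. w ! q \<noteq> y"
  proof (intro allI impI)
    fix q assume q: "q < length u"
    hence "w ! q = u ! q" unfolding w by (simp add: nth_append)
    moreover have "u ! q \<in> set u" using q by simp
    ultimately show "w ! q \<noteq> y" using nu by metis
  qed
  thus ?thesis unfolding o unfolding w by simp
qed

definition btw :: "'a list \<Rightarrow> 'a \<Rightarrow> 'a \<Rightarrow> bool" where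
  "btw w x y \<longleftrightarrow> occ w 1 x < occ w 1 y \<and> occ w 1 y < occ w 2 x"

lemma btw_intro:
  assumes "x \<notin> set u" "x \<notin> set v" "y \<in> set v" "y \<notin> set u"
  shows "btw (u @ x # v @ x # s) x y"
proof -
  obtain v1 v2 where v: "v = v1 @ y # v2" and nv: "y \<notin> set v1" using split_list_first[OF assms(3)] by blast
  have "y \<noteq> x" using assms by auto
  have "u @ x # v @ x # s = (u @ x # v1) @ y # (v2 @ x # s)" using v by simp
  moreover have "y \<notin> set (u @ x # v1)" using nv assms \<open>y \<noteq> x\<close> by auto
  ultimately have "occ (u @ x # v @ x # s) 1 y = length (u @ x # v1)"
    using occ1 by metis
  hence "occ (u @ x # v @ x # s) 1 y = length u + 1 + length v1" by simp
  then show ?thesis unfolding btw_def using occ12[OF assms(1,2)] v by simp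
qed

lemma btw_elim:
  assumes "x \<notin> set u" "x \<notin> set v" "y \<in> set (u @ x # v @ x # s)" "btw (u @ x # v @ x # s) x y"
  shows "y \<in> set v \<and> y \<notin> set u"
proof -
  let ?w = "u @ x # v @ x # s"
  define p where "p = occ ?w 1 y"
  have f: "?w ! p = y" "\<forall>q<p. ?w ! q \<noteq> y" using occ_first[OF assms(3)] p_def by auto
  have b: "length u < p" "p < Suc (length u + length v)"
    using assms(4) occ12[OF assms(1,2)] unfolding btw_def p_def by auto
  have "p - Suc (length u) < length v" using b by arith
  hence "?w ! p = v ! (p - length u - 1)" using b by (simp add: nth_append)
  hence "y \<in> set v" using f b by auto
  moreover have "y \<notin> set u"
  proof
    assume "y \<in> set u"
    then obtain q where "q < length u" "u ! q = y" by (auto simp: in_set_conv_nth)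
    moreover hence "?w ! q = y" by (simp add: nth_append)
    ultimately show False using f b by auto
  qed
  ultimately show ?thesis by blast
qed

definition good :: "'a list \<Rightarrow> ('a \<Rightarrow> nat) \<Rightarrow> 'a \<Rightarrow> bool" where
  "good w d x \<longleftrightarrow> (d x = 0 \<longrightarrow> count_list w x = 1) \<and>
     (\<forall>k. d x = Suc k \<longrightarrow> count_list w x \<ge> 2 \<and> (\<exists>y\<in>set w. d y = k \<and> btw w x y) \<and>
          (\<forall>y\<in>set w. btw w x y \<longrightarrow> k \<le> d y))"

lemma depth_char:
  assumes G: "\<forall>x\<in>set w. good w d x"
  shows "has_depth w x k \<longleftrightarrow> x \<in> set w \<and> d x = k"
proof (induction k arbitrary: x rule: less_induct)
  case (less k)
  show ?case
  proof (cases k)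
    case 0
    have "count_list w x = 1 \<Longrightarrow> x \<in> set w"
      using count_notin[of x w] by auto
    moreover have "x \<in> set w \<Longrightarrow> count_list w x = 1 \<Longrightarrow> d x = 0"
    proof (rule ccontr)
      assume xw: "x \<in> set w" and c1: "count_list w x = 1" and "d x \<noteq> 0"
      then obtain m where "d x = Suc m" using not0_implies_Suc by blast
      hence "count_list w x \<ge> 2" using G xw unfolding good_def by blast
      thus False using c1 by simp
    qed
    moreover have "x \<in> set w \<Longrightarrow> d x = 0 \<Longrightarrow> count_list w x = 1"
    proof -
      assume "x \<in> set w" "d x = 0"
      moreover hence "good w d x" using G by blast
      ultimately show "count_list w x = 1" unfolding good_def by simp
    qed
    ultimately show ?thesis unfolding 0 has_depth.simps simple_def by blast
  next
    case (Suc m)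
    have IH: "\<And>j y. j \<le> m \<Longrightarrow> has_depth w y j \<longleftrightarrow> y \<in> set w \<and> d y = j"
      using less Suc by auto
    have "has_depth w x (Suc m) \<longleftrightarrow> (\<forall>j\<le>m. \<not> (x \<in> set w \<and> d x = j)) \<and> count_list w x \<ge> 2 \<and>
       (\<exists>y. (y \<in> set w \<and> d y = m) \<and> btw w x y)"
      using IH by (simp add: btw_def)
    also have "\<dots> \<longleftrightarrow> x \<in> set w \<and> d x = Suc m"
    proof
      assume A: "(\<forall>j\<le>m. \<not> (x \<in> set w \<and> d x = j)) \<and> count_list w x \<ge> 2 \<and>
       (\<exists>y. (y \<in> set w \<and> d y = m) \<and> btw w x y)"
      hence xin: "x \<in> set w" using count_notin[of x w] by (cases "x \<in> set w") auto
      with A have "d x > m" using not_le_imp_less by blast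
      then obtain m' where m': "d x = Suc m'" "m \<le> m'" using Suc_le_D[of m "d x"] Suc_le_eq by auto
      from A obtain y where y: "y \<in> set w" "d y = m" "btw w x y" by blast
      have "m' \<le> d y" using G xin m' y unfolding good_def by blast
      thus "x \<in> set w \<and> d x = Suc m" using m' y xin by simp
    next
      assume H: "x \<in> set w \<and> d x = Suc m"
      hence g: "good w d x" using G by blast
      have c2: "count_list w x \<ge> 2" using g H unfolding good_def by blast
      have ey: "\<exists>y\<in>set w. d y = m \<and> btw w x y" using g H unfolding good_def by blast
      show "(\<forall>j\<le>m. \<not> (x \<in> set w \<and> d x = j)) \<and> count_list w x \<ge> 2 \<and>
       (\<exists>y. (y \<in> set w \<and> d y = m) \<and> btw w x y)"
        using H c2 ey by auto
    qed
    finally show ?thesis using Suc by simp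
  qed
qed

lemma D_char:
  assumes G: "\<forall>x\<in>set w. good w d x" and x: "x \<in> set w"
  shows "D w x = enat (d x)"
proof -
  have h: "\<And>k. has_depth w x k \<longleftrightarrow> k = d x" using depth_char[OF G] x by auto
  hence L: "(LEAST k. has_depth w x k) = d x" by (simp add: Least_equality)
  have e: "\<exists>k. has_depth w x k" using h by blast
  show ?thesis by (simp only: D_def if_P[OF e] L)
qed

lemma good_single:
  assumes "w = u @ x # s" "x \<notin> set u" "x \<notin> set s" "d x = 0"
  shows "good w d x"
  using assms unfolding good_def by simp

lemma good_double:
  assumes w: "w = u @ x # v @ x # s" and n: "x \<notin> set u" "x \<notin> set v" "x \<notin> set s"
    and dx: "d x = Suc k" and ya: "ya \<in> set v" "ya \<notin> set u" "d ya = k"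
    and all: "\<forall>y\<in>set v. y \<notin> set u \<longrightarrow> k \<le> d y"
  shows "good w d x"
proof -
  have c: "count_list w x = 2" using w n by simp
  have e: "\<exists>y\<in>set w. d y = k \<and> btw w x y"
    using btw_intro[OF n(1,2) ya(1,2)] ya w by auto
  have a: "\<forall>y\<in>set w. btw w x y \<longrightarrow> k \<le> d y"
    using btw_elim[OF n(1,2)] all w by blast
  show ?thesis unfolding good_def using c e a dx by simp
qed


fun dn :: "nat \<Rightarrow> letter \<Rightarrow> nat" where
  "dn n X = Suc n" | "dn n (Z i) = 1" | "dn n (T i) = 0" | "dn n (Y i k) = k"

definition PA :: "nat \<Rightarrow> letter list" where "PA = (\<lambda>i. [Z i, T i])"
definition PB :: "nat \<Rightarrow> nat \<Rightarrow> letter list" where "PB n = (\<lambda>i. [Z i, Y i n])"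
definition PC :: "nat \<Rightarrow> nat \<Rightarrow> nat \<Rightarrow> letter list" where
  "PC n j = (\<lambda>i. [Y i (n - j), Y i (n + 1 - j)])"
definition CC :: "nat \<Rightarrow> nat \<Rightarrow> letter list" where
  "CC n = (\<lambda>j. concat (map (PC n j) [1..<n+1]))"

lemma wn_eq: "wn n = concat (map PA [1..<n+1]) @ [X] @ concat (map (PB n) [1..<n+1]) @ [X] @
   concat (map (CC n) [1..<n+1])"
  unfolding wn_def PA_def PB_def PC_def CC_def by simp

lemma cc_split: "a \<le> i \<Longrightarrow> i < b \<Longrightarrow>
  concat (map f [a..<b]) = concat (map f [a..<i]) @ f i @ concat (map f [Suc i..<b])"
proof -
  assume "a \<le> i" "i < b"
  hence "[a..<b] = [a..<i] @ [i..<b]" by (metis le_add_diff_inverse less_imp_le_nat upt_add_eq_append)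
  moreover have "[i..<b] = i # [Suc i..<b]" using \<open>i < b\<close> by (simp add: upt_conv_Cons)
  ultimately show ?thesis by simp
qed

lemmas defs = PA_def PB_def PC_def CC_def

lemma goodZ: assumes "1 \<le> i" "i \<le> n" shows "Z i \<in> set (wn n) \<and> good (wn n) (dn n) (Z i)"
proof -
  have w: "wn n = concat (map PA [1..<i]) @ Z i # ([T i] @ concat (map PA [Suc i..<n+1]) @ [X] @ concat (map (PB n) [1..<i]))
     @ Z i # ([Y i n] @ concat (map (PB n) [Suc i..<n+1]) @ [X] @ concat (map (CC n) [1..<n+1]))"
    unfolding wn_eq using cc_split[of 1 i "n+1" PA] cc_split[of 1 i "n+1" "PB n"] assms
    by (simp add: PA_def PB_def)
  have "good (wn n) (dn n) (Z i)"
    by (rule good_double[OF w, where k=0 and ya="T i"]) (auto simp: defs)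
  thus ?thesis using w by simp
qed

lemma goodT: assumes "1 \<le> i" "i \<le> n" shows "T i \<in> set (wn n) \<and> good (wn n) (dn n) (T i)"
proof -
  have w: "wn n = (concat (map PA [1..<i]) @ [Z i]) @ T i # (concat (map PA [Suc i..<n+1]) @ [X] @ concat (map (PB n) [1..<n+1])
     @ [X] @ concat (map (CC n) [1..<n+1]))"
    unfolding wn_eq using cc_split[of 1 i "n+1" PA] assms
    by (simp add: PA_def)
  have "good (wn n) (dn n) (T i)"
    by (rule good_single[OF w]) (auto simp: defs)
  thus ?thesis using w by simp
qed

lemma goodX: assumes "1 \<le> n" shows "X \<in> set (wn n) \<and> good (wn n) (dn n) X"
proof -
  have w: "wn n = concat (map PA [1..<n+1]) @ X # concat (map (PB n) [1..<n+1]) @ X # concat (map (CC n) [1..<n+1])"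
    unfolding wn_eq by simp
  have "good (wn n) (dn n) X"
    by (rule good_double[OF w, where k=n and ya="Y 1 n"]) (use assms in \<open>auto simp: defs\<close>)
  thus ?thesis using w by simp
qed

lemma goodY0: assumes "1 \<le> i" "i \<le> n" shows "Y i 0 \<in> set (wn n) \<and> good (wn n) (dn n) (Y i 0)"
proof -
  have c: "concat (map (CC n) [1..<n+1]) = concat (map (CC n) [1..<n]) @ CC n n @ []"
    using cc_split[of 1 n "n+1" "CC n"] assms by simp
  have p: "CC n n = concat (map (PC n n) [1..<i]) @ [Y i 0, Y i 1] @ concat (map (PC n n) [Suc i..<n+1])"
    using cc_split[of 1 i "n+1" "PC n n"] assms by (simp add: CC_def PC_def)
  have w: "wn n = (concat (map PA [1..<n+1]) @ [X] @ concat (map (PB n) [1..<n+1]) @ [X] @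
     concat (map (CC n) [1..<n]) @ concat (map (PC n n) [1..<i])) @ Y i 0 # (Y i 1 # concat (map (PC n n) [Suc i..<n+1]))"
    unfolding wn_eq c p by simp
  have "good (wn n) (dn n) (Y i 0)"
    by (rule good_single[OF w]) (use assms in \<open>auto simp: defs\<close>)
  thus ?thesis using w by simp
qed

lemma goodYn: assumes "1 \<le> i" "i \<le> n" shows "Y i n \<in> set (wn n) \<and> good (wn n) (dn n) (Y i n)"
proof -
  have c: "concat (map (CC n) [1..<n+1]) = [] @ CC n 1 @ concat (map (CC n) [Suc 1..<n+1])"
    using cc_split[of 1 1 "n+1" "CC n"] assms by (simp del: upt_Suc)
  have p: "CC n 1 = concat (map (PC n 1) [1..<i]) @ [Y i (n-1), Y i n] @ concat (map (PC n 1) [Suc i..<n+1])"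
    using cc_split[of 1 i "n+1" "PC n 1"] assms by (simp add: CC_def PC_def)
  have b: "concat (map (PB n) [1..<n+1]) = concat (map (PB n) [1..<i]) @ [Z i, Y i n] @ concat (map (PB n) [Suc i..<n+1])"
    using cc_split[of 1 i "n+1" "PB n"] assms by (simp add: PB_def)
  have w: "wn n = (concat (map PA [1..<n+1]) @ [X] @ concat (map (PB n) [1..<i]) @ [Z i]) @ Y i n #
     (concat (map (PB n) [Suc i..<n+1]) @ [X] @ concat (map (PC n 1) [1..<i]) @ [Y i (n-1)]) @ Y i n #
     (concat (map (PC n 1) [Suc i..<n+1]) @ concat (map (CC n) [Suc 1..<n+1]))"
    unfolding wn_eq c p b by simp
  have "good (wn n) (dn n) (Y i n)"
    by (rule good_double[OF w, where k="n-1" and ya="Y i (n-1)"]) (use assms in \<open>auto simp: defs\<close>)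
  thus ?thesis using w by simp
qed

lemma goodYk: assumes "1 \<le> i" "i \<le> n" "1 \<le> k" "k < n"
  shows "Y i k \<in> set (wn n) \<and> good (wn n) (dn n) (Y i k)"
proof -
  define j where "j = n - k"
  have j: "1 \<le> j" "j < n" "n - j = k" "n + 1 - j = Suc k" "n - Suc j = k - 1" "n + 1 - Suc j = k"
    using assms unfolding j_def by auto
  have c: "concat (map (CC n) [1..<n+1]) = concat (map (CC n) [1..<j]) @ CC n j @ CC n (Suc j) @
     concat (map (CC n) [Suc (Suc j)..<n+1])"
    using cc_split[of 1 j "n+1" "CC n"] cc_split[of "Suc j" "Suc j" "n+1" "CC n"] j by simp
  have p1: "CC n j = concat (map (PC n j) [1..<i]) @ [Y i k, Y i (Suc k)] @ concat (map (PC n j) [Suc i..<n+1])"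
    using cc_split[of 1 i "n+1" "PC n j"] assms j by (simp add: CC_def PC_def)
  have p2: "CC n (Suc j) = concat (map (PC n (Suc j)) [1..<i]) @ [Y i (k-1), Y i k] @ concat (map (PC n (Suc j)) [Suc i..<n+1])"
    using cc_split[of 1 i "n+1" "PC n (Suc j)"] assms j by (simp add: CC_def PC_def)
  have w: "wn n = (concat (map PA [1..<n+1]) @ [X] @ concat (map (PB n) [1..<n+1]) @ [X] @
      concat (map (CC n) [1..<j]) @ concat (map (PC n j) [1..<i])) @ Y i k #
     ([Y i (Suc k)] @ concat (map (PC n j) [Suc i..<n+1]) @ concat (map (PC n (Suc j)) [1..<i]) @ [Y i (k-1)]) @ Y i k #
     (concat (map (PC n (Suc j)) [Suc i..<n+1]) @ concat (map (CC n) [Suc (Suc j)..<n+1]))"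
    unfolding wn_eq c p1 p2 by simp
  have "good (wn n) (dn n) (Y i k)"
    by (rule good_double[OF w, where k="k-1" and ya="Y i (k-1)"]) (use assms j in \<open>auto simp: defs\<close>)
  thus ?thesis using w by simp
qed

lemma goodY: assumes "1 \<le> i" "i \<le> n" "k \<le> n"
  shows "Y i k \<in> set (wn n) \<and> good (wn n) (dn n) (Y i k)"
proof -
  consider "k = 0" | "k = n" | "1 \<le> k \<and> k < n" using assms by linarith
  thus ?thesis using goodY0 goodYn goodYk assms by cases auto
qed

lemma set_wn: "x \<in> set (wn n) \<Longrightarrow> x = X \<or> (\<exists>i. 1 \<le> i \<and> i \<le> n \<and> (x = Z i \<or> x = T i \<or> (\<exists>k\<le>n. x = Y i k)))"
  unfolding wn_eq by (auto simp: defs)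

lemma good_all: assumes "1 \<le> n" shows "\<forall>x\<in>set (wn n). good (wn n) (dn n) x"
proof
  fix x assume "x \<in> set (wn n)"
  from set_wn[OF this] show "good (wn n) (dn n) x"
    using goodX[OF assms] goodZ goodT goodY by auto
qed

theorem lemma2:
  fixes n :: nat
  assumes "n \<ge> 1"
  shows "D (wn n) X = enat (n + 1) \<and>
         (\<forall>i\<in>{1..n}. \<forall>k\<in>{0..n}. D (wn n) (Y i k) = enat k) \<and>
         (\<forall>i\<in>{1..n}. D (wn n) (T i) = 0) \<and>
         (\<forall>i\<in>{1..n}. D (wn n) (Z i) = 1)"
proof -
  note G = good_all[OF assms]
  have "D (wn n) X = enat (n + 1)" using D_char[OF G] goodX[OF assms] by simp
  moreover have "\<forall>i\<in>{1..n}. \<forall>k\<in>{0..n}. D (wn n) (Y i k) = enat k"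
    using D_char[OF G] goodY by auto
  moreover have "\<forall>i\<in>{1..n}. D (wn n) (T i) = 0"
    using D_char[OF G] goodT by (auto simp: zero_enat_def)
  moreover have "\<forall>i\<in>{1..n}. D (wn n) (Z i) = 1"
    using D_char[OF G] goodZ by (auto simp: one_enat_def)
  ultimately show ?thesis by blast
qed

end
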